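(* Let $d_1,\dots,d_n$ be positive integers with $d=\sum_id_i\ge2$, and let $c_0,c_1\in\mathbb{R}^n$ (in the paper $c_0=(\ln a_1,\dots,\ln a_n)$, $c_1=(\ln b_1,\dots,\ln b_n)$ for positive $a_i,b_i$). There exists a bounded convex open set $\Omega\subset\mathbb{R}\times C^1([0,1];\mathbb{R}^n)$ containing every pair $(\lambda,y)$ that, for some $p_3\in[0,1]$, satisfies $$\sum_{i=1}^nd_i\Big(-y_i'\sum_{k=1}^nd_ky_k'+y_i'^2\Big)\Big|_{r=0}=(d-1)\lambda,$$ $$-y_i'\sum_{k=1}^nd_ky_k'-y_i''=\lambda\ \text{ on }[0,1]\ (i=1,\dots,n),\qquad y(0)=p_3c_0,\quad y(1)=p_3c_1.$$
   Context: $\mathbb{R}\times C^1([0,1];\mathbb{R}^n)$ is the Banach space with the product norm (absolute value on $\mathbb{R}$, $C^1$ norm on the second factor); solutions $y$ are $C^2$. *)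

theory Defs
  imports "HOL-Analysis.Analysis"
begin

text \<open>Elements are represented
  by functions real => real^'n that are C^1 on [0,1] (one-sided derivatives at the
  endpoints) and normalised to 0 outside [0,1], so that each element of the
  space has a unique representative.\<close>

definition C1 :: "(real \<Rightarrow> real ^ 'n) \<Rightarrow> bool" where
  "C1 y \<longleftrightarrow>
     (\<exists>y'. (\<forall>t\<in>{0..1}. (y has_vector_derivative y' t) (at t within {0..1}))
           \<and> continuous_on {0..1} y')
     \<and> (\<forall>t. t \<notin> {0..1} \<longrightarrow> y t = 0)"

definition c1norm :: "(real \<Rightarrow> real ^ 'n) \<Rightarrow> real" where
  "c1norm y = (SUP t\<in>{0..1}. norm (y t))
              + (SUP t\<in>{0..1}. norm (vector_derivative y (at t within {0..1})))"

definition pnorm :: "real \<times> (real \<Rightarrow> real ^ 'n) \<Rightarrow> real" where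
  "pnorm p = \<bar>fst p\<bar> + c1norm (snd p)"

definition pdiff :: "real \<times> (real \<Rightarrow> real ^ 'n) \<Rightarrow> real \<times> (real \<Rightarrow> real ^ 'n)
                     \<Rightarrow> real \<times> (real \<Rightarrow> real ^ 'n)" where
  "pdiff p q = (fst p - fst q, (\<lambda>t. snd p t - snd q t))"

definition space :: "(real \<times> (real \<Rightarrow> real ^ 'n)) set" where
  "space = UNIV \<times> {y. C1 y}"

definition bounded_X :: "(real \<times> (real \<Rightarrow> real ^ 'n)) set \<Rightarrow> bool" where
  "bounded_X S \<longleftrightarrow> (\<exists>B. \<forall>p\<in>S. pnorm p \<le> B)"

definition convex_X :: "(real \<times> (real \<Rightarrow> real ^ 'n)) set \<Rightarrow> bool" where
  "convex_X S \<longleftrightarrow> (\<forall>p\<in>S. \<forall>q\<in>S. \<forall>u::real. 0 \<le> u \<and> u \<le> 1 \<longrightarrow>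
      ((1 - u) * fst p + u * fst q, (\<lambda>t. (1 - u) *\<^sub>R snd p t + u *\<^sub>R snd q t)) \<in> S)"

definition open_X :: "(real \<times> (real \<Rightarrow> real ^ 'n)) set \<Rightarrow> bool" where
  "open_X S \<longleftrightarrow> (\<forall>p\<in>S. \<exists>e>0. \<forall>q\<in>space. pnorm (pdiff q p) < e \<longrightarrow> q \<in> S)"

end

theory Submission
  imports Defs
begin


lemma comp_deriv:
  fixes y :: "real \<Rightarrow> real ^ 'n"
  assumes "(y has_vector_derivative v) (at t within S)"
  shows "((\<lambda>t. y t $ i) has_real_derivative v $ i) (at t within S)"
proof -
  have "((\<lambda>x. y x $ i) has_derivative (\<lambda>h. (h *\<^sub>R v) $ i)) (at t within S)"
    using bounded_linear.has_derivative[OF bounded_linear_vec_nth assms[unfolded has_vector_derivative_def]] .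
  moreover have "(\<lambda>h. (h *\<^sub>R v) $ i) = (*) (v $ i)" by (auto simp: fun_eq_iff)
  ultimately show ?thesis by (simp add: has_field_derivative_def)
qed

lemma mono_within:
  fixes f :: "real \<Rightarrow> real"
  assumes "\<And>t. t\<in>{0..1} \<Longrightarrow> (f has_real_derivative f' t) (at t within {0..1})"
    and "\<And>t. t\<in>{0..1} \<Longrightarrow> f' t \<ge> 0" and "0 \<le> a" "a \<le> b" "b \<le> 1"
  shows "f a \<le> f b"
proof -
  have "\<exists>x\<in>{a..b}. f b - f a = (*) (f' x) (b - a)"
  proof (rule mvt_very_simple[OF assms(4)])
    fix x assume "a \<le> x" "x \<le> b"
    then have "(f has_real_derivative f' x) (at x within {0..1})" using assms by auto
    then have "(f has_real_derivative f' x) (at x within {a..b})"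
      by (rule DERIV_subset) (use assms in auto)
    then show "(f has_derivative (*) (f' x)) (at x within {a..b})"
      by (simp add: has_field_derivative_def)
  qed
  then obtain x where "x \<in> {a..b}" "f b - f a = f' x * (b - a)" by auto
  moreover have "f' x \<ge> 0" using assms \<open>x \<in> {a..b}\<close> by auto
  ultimately show ?thesis using assms by (metis diff_ge_0_iff_ge mult_nonneg_nonneg)
qed

lemma mvt01:
  fixes f :: "real \<Rightarrow> real"
  assumes "\<And>t. t\<in>{0..1} \<Longrightarrow> (f has_real_derivative f' t) (at t within {0..1})"
  shows "\<exists>x\<in>{0..1}. f 1 - f 0 = f' x"
proof -
  have "\<exists>x\<in>{0..1}. f 1 - f 0 = (*) (f' x) (1 - 0)"
    by (rule mvt_very_simple) (use assms in \<open>auto simp: has_field_derivative_def\<close>)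
  then show ?thesis by auto
qed

lemma const_within:
  fixes f :: "real \<Rightarrow> real"
  assumes "\<And>t. t\<in>{0..1} \<Longrightarrow> (f has_real_derivative 0) (at t within {0..1})"
    and "t \<in> {0..1}"
  shows "f t = f 0"
proof -
  have "f 0 \<le> f t" by (rule mono_within[of f "\<lambda>_. 0"]) (use assms in auto)
  moreover have "- f 0 \<le> - f t"
    by (rule mono_within[of "\<lambda>x. - f x" "\<lambda>_. 0"]) (use assms in \<open>auto intro!: derivative_eq_intros\<close>)
  ultimately show ?thesis by simp
qed

lemma sum_sq_le_sq_sum:
  fixes f :: "'a \<Rightarrow> real"
  assumes "finite A" "\<And>x. x \<in> A \<Longrightarrow> f x \<ge> 0"
  shows "(\<Sum>x\<in>A. (f x)^2) \<le> (\<Sum>x\<in>A. f x)^2"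
  using assms
proof (induction A rule: finite_induct)
  case (insert a A)
  have "0 \<le> f a * sum f A" using insert by (auto intro!: mult_nonneg_nonneg sum_nonneg)
  then show ?case using insert by (simp add: power2_eq_square algebra_simps)
qed simp

definition "Dn (d::'n \<Rightarrow> nat) = real (\<Sum>i\<in>UNIV. d i)"
definition "Kc (d::'n \<Rightarrow> nat) (c0::real^'n) c1 = 2 * (Dn d)^2 * norm (c1 - c0)"
definition "Lc (d::'n \<Rightarrow> nat) (c0::real^'n) c1 = Dn d * (norm (c1 - c0))^2 + (Kc d c0 c1)^2"
definition "Ac (d::'n \<Rightarrow> nat) (c0::real^'n) c1 = sqrt (Dn d * Lc d c0 c1)"
definition "Cc (d::'n \<Rightarrow> nat) (c0::real^'n) c1 = 2 * (1 + Dn d * Lc d c0 c1)"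
definition "Phi (d::'n \<Rightarrow> nat) (c0::real^'n) c1 = ln (1 + (Dn d)^2 * (norm (c1 - c0))^2)
    + Cc d c0 c1 * Kc d c0 c1 + Cc d c0 c1 * Ac d c0 c1"
definition "Wc (d::'n \<Rightarrow> nat) (c0::real^'n) c1 = sqrt (exp (Phi d c0 c1) + Dn d * Lc d c0 c1)"

lemma apriori:
  fixes d :: "'n::finite \<Rightarrow> nat" and c0 c1 :: "real ^ 'n"
  assumes dpos: "\<And>i. d i > 0" and d2: "(\<Sum>i\<in>UNIV. d i) \<ge> 2"
    and p3: "p3 \<in> {0..1}"
    and dy: "\<forall>t\<in>{0..1}. (y has_vector_derivative y' t) (at t within {0..1})"
    and dy': "\<forall>t\<in>{0..1}. (y' has_vector_derivative y'' t) (at t within {0..1})"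
    and bc: "(\<Sum>i\<in>UNIV. real (d i) *
                  (- (y' 0 $ i) * (\<Sum>k\<in>UNIV. real (d k) * y' 0 $ k) + (y' 0 $ i)^2))
                = (real (\<Sum>i\<in>UNIV. d i) - 1) * lam"
    and eq: "\<forall>t\<in>{0..1}. \<forall>i.
                  - (y' t $ i) * (\<Sum>k\<in>UNIV. real (d k) * y' t $ k) - y'' t $ i = lam"
    and y0: "y 0 = p3 *\<^sub>R c0" and y1: "y 1 = p3 *\<^sub>R c1"
  shows "\<bar>lam\<bar> \<le> Lc d c0 c1 \<and> (\<forall>t\<in>{0..1}. \<forall>i. \<bar>y' t $ i\<bar> \<le> Wc d c0 c1)"
proof -
  define D where "D = Dn d"
  define B0 where "B0 = norm (c1 - c0)"
  define K where "K = Kc d c0 c1"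
  define L where "L = Lc d c0 c1"
  define A where "A = Ac d c0 c1"
  define c where "c = Cc d c0 c1"
  have K_def': "K = 2 * D^2 * B0" unfolding K_def Kc_def D_def B0_def ..
  have L_def': "L = D * B0^2 + K^2" unfolding L_def Lc_def D_def B0_def K_def ..
  have A_def': "A = sqrt (D * L)" unfolding A_def Ac_def D_def L_def ..
  have c_def': "c = 2 * (1 + D * L)" unfolding c_def Cc_def D_def L_def ..
  have Phi_eq: "Phi d c0 c1 = ln (1 + D^2 * B0^2) + c * K + c * A"
    unfolding Phi_def D_def B0_def c_def K_def A_def ..
  have Wc_eq: "Wc d c0 c1 = sqrt (exp (Phi d c0 c1) + D * L)"
    unfolding Wc_def D_def L_def ..
  have D2: "D \<ge> 2" unfolding D_def Dn_def using d2
    by (metis of_nat_le_iff of_nat_numeral)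
  have Dsum: "D = (\<Sum>i\<in>UNIV. real (d i))" unfolding D_def Dn_def by simp
  have B0: "B0 \<ge> 0" unfolding B0_def by simp
  define s where "s t = (\<Sum>k\<in>UNIV. real (d k) * y' t $ k)" for t
  define P where "P t = (\<Sum>k\<in>UNIV. real (d k) * y t $ k)" for t
  have dY: "((\<lambda>t. y t $ i) has_real_derivative y' t $ i) (at t within {0..1})"
    if "t \<in> {0..1}" for i t using comp_deriv dy that by blast
  have dW: "((\<lambda>t. y' t $ i) has_real_derivative y'' t $ i) (at t within {0..1})"
    if "t \<in> {0..1}" for i t using comp_deriv dy' that by blast
  have aeq: "y'' t $ i = - (y' t $ i) * s t - lam" if "t \<in> {0..1}" for i t
    using eq that unfolding s_def by (metis add_diff_cancel_left' diff_add_cancel)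
  have dP: "(P has_real_derivative s t) (at t within {0..1})" if "t \<in> {0..1}" for t
    unfolding P_def s_def using dY[OF that] by (auto intro!: derivative_eq_intros simp: mult.commute)
  have sd: "(\<Sum>k\<in>UNIV. real (d k) * y'' t $ k) = - ((s t)^2) - D * lam" if "t \<in> {0..1}" for t
  proof -
    have "(\<Sum>k\<in>UNIV. real (d k) * y'' t $ k) = (\<Sum>k\<in>UNIV. - s t * (real (d k) * y' t $ k) - lam * real (d k))"
      by (rule sum.cong) (auto simp: aeq[OF that] algebra_simps)
    also have "\<dots> = - s t * s t - lam * D"
      by (simp add: sum_subtractf sum_negf sum_distrib_left[symmetric] s_def Dsum)
    finally show ?thesis by (simp add: power2_eq_square)
  qed
  have ds: "(s has_real_derivative (- ((s t)^2) - D * lam)) (at t within {0..1})" if "t \<in> {0..1}" for t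
  proof -
    have "(s has_real_derivative (\<Sum>k\<in>UNIV. real (d k) * y'' t $ k)) (at t within {0..1})"
      unfolding s_def[abs_def] using dW[OF that] by (auto intro!: derivative_eq_intros simp: mult.commute)
    then show ?thesis using sd[OF that] by simp
  qed
  define Q where "Q t = (\<Sum>i\<in>UNIV. real (d i) * (y' t $ i)^2) - (s t)^2 - (D - 1) * lam" for t
  have Q0: "Q 0 = 0"
  proof -
    have "(\<Sum>i\<in>UNIV. real (d i) * (- (y' 0 $ i) * s 0 + (y' 0 $ i)^2))
        = (\<Sum>i\<in>UNIV. real (d i) * (y' 0 $ i)^2) - s 0 * s 0"
    proof -
      have h: "(\<Sum>i\<in>UNIV. real (d i) * (y' 0 $ i * s 0)) = s 0 * s 0"
      proof -
        have "(\<Sum>i\<in>UNIV. real (d i) * (y' 0 $ i * s 0)) = (\<Sum>i\<in>UNIV. real (d i) * y' 0 $ i) * s 0"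
          by (simp add: sum_distrib_right mult.assoc)
        then show ?thesis by (simp add: s_def)
      qed
      have "(\<Sum>i\<in>UNIV. real (d i) * (- (y' 0 $ i) * s 0 + (y' 0 $ i)^2))
          = (\<Sum>i\<in>UNIV. real (d i) * (y' 0 $ i)^2 - real (d i) * (y' 0 $ i * s 0))"
        by (rule sum.cong) (auto simp: algebra_simps)
      also have "\<dots> = (\<Sum>i\<in>UNIV. real (d i) * (y' 0 $ i)^2) - s 0 * s 0"
        by (simp add: sum_subtractf h)
      finally show ?thesis .
    qed
    then show ?thesis using bc unfolding Q_def s_def D_def Dn_def
      by (simp add: power2_eq_square)
  qed
  have dQ: "((\<lambda>t. Q t * exp (2 * P t)) has_real_derivative 0) (at t within {0..1})"
    if t: "t \<in> {0..1}" for t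
  proof -
    define X where "X = (\<Sum>i\<in>UNIV. real (d i) * (2 * y' t $ i * y'' t $ i))
          - 2 * s t * (- ((s t)^2) - D * lam)"
    have d1: "(Q has_real_derivative X) (at t within {0..1})"
      unfolding Q_def[abs_def] X_def using dW[OF t] ds[OF t]
      by (auto intro!: derivative_eq_intros simp: algebra_simps)
    have e1: "(\<Sum>i\<in>UNIV. real (d i) * (2 * y' t $ i * y'' t $ i))
        = (\<Sum>i\<in>UNIV. - 2 * s t * (real (d i) * (y' t $ i)^2) - 2 * lam * (real (d i) * y' t $ i))"
      by (rule sum.cong) (auto simp: aeq[OF t] algebra_simps power2_eq_square)
    also have "\<dots> = - 2 * s t * (\<Sum>i\<in>UNIV. real (d i) * (y' t $ i)^2) - 2 * lam * s t"
      by (simp add: sum_subtractf sum_negf sum_distrib_left[symmetric] s_def)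
    finally have e2: "(\<Sum>i\<in>UNIV. real (d i) * (2 * y' t $ i * y'' t $ i)) = \<dots>" .
    have "X = - 2 * s t * Q t" unfolding X_def e2 Q_def by (simp add: algebra_simps power2_eq_square)
    then have "(Q has_real_derivative - 2 * s t * Q t) (at t within {0..1})" using d1 by simp
    then show ?thesis using dP[OF t]
      by (auto intro!: derivative_eq_intros simp: algebra_simps)
  qed
  have Qz: "Q t = 0" if "t \<in> {0..1}" for t
    using const_within[of "\<lambda>t. Q t * exp (2 * P t)", OF dQ that] Q0 by simp
  define u where "u i t = D * y' t $ i - s t" for i t
  have du: "((\<lambda>t. u i t * exp (P t)) has_real_derivative 0) (at t within {0..1})"
    if t: "t \<in> {0..1}" for i t
  proof -
    have "(u i has_real_derivative D * y'' t $ i - (- ((s t)^2) - D * lam)) (at t within {0..1})"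
      unfolding u_def[abs_def] using dW[OF t] ds[OF t] by (auto intro!: derivative_eq_intros)
    moreover have "D * y'' t $ i - (- ((s t)^2) - D * lam) = - s t * u i t"
      unfolding u_def aeq[OF t] by (simp add: algebra_simps power2_eq_square)
    ultimately have "(u i has_real_derivative - s t * u i t) (at t within {0..1})" by simp
    then show ?thesis using dP[OF t]
      by (auto intro!: derivative_eq_intros simp: algebra_simps)
  qed
  have usgn: "sgn (u i 0) * u i t = \<bar>u i t\<bar>" if t: "t \<in> {0..1}" for i t
  proof -
    have "u i t * exp (P t) = u i 0 * exp (P 0)"
      using const_within[of "\<lambda>t. u i t * exp (P t)", OF du t] by simp
    then have "u i t = u i 0 * (exp (P 0) / exp (P t))" by (simp add: field_simps)
    moreover have "exp (P 0) / exp (P t) > 0" by simp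
    ultimately show ?thesis
      by (cases "u i 0 > 0"; cases "u i 0 < 0") (auto simp: abs_mult sgn_if)
  qed
  define G where "G t = (\<Sum>i\<in>UNIV. real (d i) * sgn (u i 0) * (D * y t $ i - P t))" for t
  define g where "g t = (\<Sum>i\<in>UNIV. real (d i) * \<bar>u i t\<bar>)" for t
  have dG: "(G has_real_derivative g t) (at t within {0..1})" if t: "t \<in> {0..1}" for t
  proof -
    have "(G has_real_derivative (\<Sum>i\<in>UNIV. real (d i) * sgn (u i 0) * (D * y' t $ i - s t)))
        (at t within {0..1})"
      unfolding G_def[abs_def] using dY[OF t] dP[OF t] by (auto intro!: derivative_eq_intros sum.cong simp: algebra_simps)
    moreover have "(\<Sum>i\<in>UNIV. real (d i) * sgn (u i 0) * (D * y' t $ i - s t)) = g t"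
      unfolding g_def by (rule sum.cong) (simp_all add: u_def[symmetric] mult.assoc usgn[OF t])
    ultimately show ?thesis by simp
  qed
  have g0: "g t \<ge> 0" for t unfolding g_def by (auto intro!: sum_nonneg)
  have Wid: "(\<Sum>i\<in>UNIV. real (d i) * (u i t)^2) = D * (D - 1) * ((s t)^2 + D * lam)"
    if t: "t \<in> {0..1}" for t
  proof -
    have "(\<Sum>i\<in>UNIV. real (d i) * (u i t)^2) = (\<Sum>i\<in>UNIV. D^2 * (real (d i) * (y' t $ i)^2)
        - 2 * D * s t * (real (d i) * y' t $ i) + (s t)^2 * real (d i))"
      unfolding u_def by (rule sum.cong) (auto simp: algebra_simps power2_eq_square)
    also have "\<dots> = D^2 * (\<Sum>i\<in>UNIV. real (d i) * (y' t $ i)^2) - 2 * D * s t * s t + (s t)^2 * D"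
      by (simp add: sum.distrib sum_subtractf sum_distrib_left[symmetric] s_def Dsum)
    also have "(\<Sum>i\<in>UNIV. real (d i) * (y' t $ i)^2) = (s t)^2 + (D - 1) * lam"
      using Qz[OF t] unfolding Q_def by simp
    finally show ?thesis by (simp add: algebra_simps power2_eq_square)
  qed
  have gW: "(g t)^2 \<ge> D * (D - 1) * ((s t)^2 + D * lam)" if t: "t \<in> {0..1}" for t
  proof -
    have "(\<Sum>i\<in>UNIV. real (d i) * (u i t)^2) \<le> (\<Sum>i\<in>UNIV. (real (d i) * \<bar>u i t\<bar>)^2)"
    proof (rule sum_mono)
      fix i
      have "real (d i) \<ge> 1" using dpos[of i] by simp
      then have "real (d i) * (u i t)^2 \<le> real (d i) * real (d i) * (u i t)^2"
        by (simp add: mult_right_mono)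
      then show "real (d i) * (u i t)^2 \<le> (real (d i) * \<bar>u i t\<bar>)^2"
        by (simp add: power2_eq_square algebra_simps)
    qed
    also have "\<dots> \<le> (g t)^2" unfolding g_def by (rule sum_sq_le_sq_sum) auto
    finally show ?thesis using Wid[OF t] by simp
  qed
  have Dpos: "D > 0" using D2 by simp
  have dyb: "\<bar>y 1 $ i - y 0 $ i\<bar> \<le> B0" for i
  proof -
    have "\<bar>y 1 $ i - y 0 $ i\<bar> = p3 * \<bar>(c1 - c0) $ i\<bar>"
      using p3 by (simp add: y0 y1 right_diff_distrib[symmetric] abs_mult)
    also have "\<dots> \<le> \<bar>(c1 - c0) $ i\<bar>" using p3 by (simp add: mult_left_le_one_le)
    also have "\<dots> \<le> B0" unfolding B0_def by (rule component_le_norm_cart)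
    finally show ?thesis .
  qed
  have dPb: "\<bar>P 1 - P 0\<bar> \<le> D * B0"
  proof -
    have "P 1 - P 0 = (\<Sum>k\<in>UNIV. real (d k) * (y 1 $ k - y 0 $ k))"
      unfolding P_def by (simp add: sum_subtractf right_diff_distrib)
    also have "\<bar>\<dots>\<bar> \<le> (\<Sum>k\<in>UNIV. \<bar>real (d k) * (y 1 $ k - y 0 $ k)\<bar>)" by (rule sum_abs)
    also have "\<dots> \<le> (\<Sum>k\<in>UNIV. real (d k) * B0)"
      by (rule sum_mono) (simp add: abs_mult dyb mult_left_mono)
    also have "\<dots> = D * B0" by (simp add: Dsum sum_distrib_right)
    finally show ?thesis .
  qed
  have GK: "G 1 - G 0 \<le> K"
  proof -
    have "G 1 - G 0 = (\<Sum>i\<in>UNIV. real (d i) * (sgn (u i 0) * (D * (y 1 $ i - y 0 $ i) - (P 1 - P 0))))"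
      unfolding G_def by (simp add: sum_subtractf[symmetric] algebra_simps)
    also have "\<dots> \<le> (\<Sum>i\<in>UNIV. real (d i) * (2 * D * B0))"
    proof (rule sum_mono)
      fix i
      let ?X = "D * (y 1 $ i - y 0 $ i) - (P 1 - P 0)"
      have "sgn (u i 0) * ?X \<le> \<bar>?X\<bar>" by (auto simp: sgn_if)
      also have "\<bar>?X\<bar> \<le> D * \<bar>y 1 $ i - y 0 $ i\<bar> + \<bar>P 1 - P 0\<bar>"
        using Dpos abs_triangle_ineq4[of "D * (y 1 $ i - y 0 $ i)" "P 1 - P 0"] by (simp add: abs_mult)
      also have "\<dots> \<le> D * B0 + D * B0"
        using mult_left_mono[OF dyb[of i], of D] dPb Dpos by linarith
      finally have "sgn (u i 0) * ?X \<le> 2 * D * B0" by (simp add: algebra_simps)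
      then show "real (d i) * (sgn (u i 0) * ?X) \<le> real (d i) * (2 * D * B0)"
        by (simp add: mult_left_mono)
    qed
    also have "\<dots> = K" by (simp add: K_def' Dsum[symmetric] sum_distrib_right[symmetric] power2_eq_square)
    finally show ?thesis .
  qed
  have Gmono: "G a \<le> G b" if "0 \<le> a" "a \<le> b" "b \<le> 1" for a b
    by (rule mono_within[of G g]) (use dG g0 that in auto)
  obtain \<xi> where xi: "\<xi> \<in> {0..1}" "P 1 - P 0 = s \<xi>" using mvt01[of P s] dP by blast
  have sxi: "\<bar>s \<xi>\<bar> \<le> D * B0" using xi dPb by simp
  have Wpos: "(s t)^2 + D * lam \<ge> 0" if t: "t \<in> {0..1}" for t
  proof -
    have "0 \<le> (\<Sum>i\<in>UNIV. real (d i) * (u i t)^2)" by (auto intro!: sum_nonneg)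
    then have "0 \<le> D * (D - 1) * ((s t)^2 + D * lam)" using Wid[OF t] by simp
    moreover have "D * (D - 1) > 0" using D2 by simp
    ultimately show ?thesis by (simp add: zero_le_mult_iff)
  qed
  have lamlo: "lam \<ge> - D * B0^2"
  proof -
    have "(s \<xi>)^2 \<le> (D * B0)^2"
      using sxi by (metis abs_ge_zero power2_abs power_mono)
    then have "D * lam \<ge> - (D * (D * B0^2))" using Wpos[OF xi(1)] by (simp add: power_mult_distrib power2_eq_square algebra_simps)
    then have "D * lam \<ge> D * (- D * B0^2)" by simp
    then show ?thesis using Dpos by (subst (asm) mult_le_cancel_left_pos) auto
  qed
  have K0: "K \<ge> 0" unfolding K_def' using B0 by simp
  have lamhi: "lam \<le> K^2"
  proof (cases "lam > 0")
    case True
    have gl: "sqrt lam \<le> g t" if t: "t \<in> {0..1}" for t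
    proof -
      have "lam \<le> D * (D - 1) * ((s t)^2 + D * lam)"
      proof -
        have h1: "D - 1 \<ge> 1" using D2 by simp
        have h2: "D * (D - 1) \<ge> 2 * 1" using mult_mono[OF D2 h1] D2 by simp
        have "D * (D - 1) * D \<ge> 2 * 2" using mult_mono[OF h2 D2] h2 by simp
        then have "D * (D - 1) * D \<ge> 1" by simp
        then have "lam \<le> D * (D - 1) * D * lam" using True by simp
        also have "\<dots> \<le> D * (D - 1) * ((s t)^2 + D * lam)"
          using D2 mult_nonneg_nonneg[of "D * (D - 1)" "(s t)^2"] by (simp add: algebra_simps)
        finally show ?thesis .
      qed
      then have "lam \<le> (g t)^2" using gW[OF t] by simp
      then show ?thesis using g0[of t] by (simp add: real_le_lsqrt real_sqrt_le_iff)
    qed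
    have "G 0 - sqrt lam * 0 \<le> G 1 - sqrt lam * 1"
      by (rule mono_within[of "\<lambda>t. G t - sqrt lam * t" "\<lambda>t. g t - sqrt lam"])
        (use gl dG in \<open>auto intro!: derivative_eq_intros\<close>)
    then have "sqrt lam \<le> K" using GK by simp
    then show ?thesis using real_sqrt_le_iff[of lam "K^2"] K0 by simp
  qed (meson not_less order_trans zero_le_power2)
  have lamL: "\<bar>lam\<bar> \<le> L"
  proof -
    have "D * B0^2 \<ge> 0" using Dpos by simp
    moreover have "K^2 \<ge> 0" by simp
    ultimately show ?thesis unfolding L_def' using lamlo lamhi by linarith
  qed
  have L0: "L \<ge> 0" using lamL by simp
  have A0: "A \<ge> 0" unfolding A_def' using L0 Dpos by simp
  have AL: "A^2 = D * L" unfolding A_def' using L0 Dpos by simp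
  have c0: "c \<ge> 0" unfolding c_def' using L0 Dpos by simp
  have DlamL: "D * lam \<ge> - (D * L)"
  proof -
    have "- L \<le> lam" using lamL by linarith
    then have "D * (- L) \<le> D * lam" using Dpos by (intro mult_left_mono) auto
    then show ?thesis by simp
  qed
  have DlamL2: "\<bar>D * lam\<bar> \<le> D * L" using lamL Dpos by (simp add: abs_mult)
  have sg: "\<bar>s t\<bar> \<le> g t + A" if t: "t \<in> {0..1}" for t
  proof -
    have h1: "D * (D - 1) \<ge> 1"
    proof -
      have "D - 1 \<ge> 1" using D2 by simp
      then show ?thesis using mult_mono[of 1 D 1 "D - 1"] D2 by simp
    qed
    have "(s t)^2 + D * lam \<le> D * (D - 1) * ((s t)^2 + D * lam)"
      using mult_right_mono[OF h1 Wpos[OF t]] by simp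
    then have "(s t)^2 + D * lam \<le> (g t)^2" using gW[OF t] by simp
    then have "(s t)^2 \<le> (g t)^2 + A^2" using DlamL AL by simp
    also have "\<dots> \<le> (g t + A)^2" using g0[of t] A0 by (simp add: power2_eq_square algebra_simps)
    finally have "\<bar>s t\<bar>^2 \<le> (g t + A)^2" by simp
    moreover have "0 \<le> g t + A" using g0[of t] A0 by simp
    ultimately show ?thesis by (rule power2_le_imp_le)
  qed
  define \<phi> where "\<phi> t = ln (1 + (s t)^2)" for t
  define \<phi>' where "\<phi>' t = 2 * s t * (- ((s t)^2) - D * lam) / (1 + (s t)^2)" for t
  have pos1: "1 + (s t)^2 > 0" for t by (simp add: add_pos_nonneg)
  have d\<phi>: "(\<phi> has_real_derivative \<phi>' t) (at t within {0..1})" if t: "t \<in> {0..1}" for t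
  proof -
    have h0: "((\<lambda>t. 1 + (s t)^2) has_real_derivative 0 + of_nat 2 * ((- ((s t)^2) - D * lam) * s t ^ (2 - Suc 0)))
        (at t within {0..1})"
      by (rule DERIV_add[OF DERIV_const DERIV_power[OF ds[OF t]]])
    have h: "((\<lambda>t. 1 + (s t)^2) has_real_derivative 2 * s t * (- ((s t)^2) - D * lam))
        (at t within {0..1})"
      using h0 by (simp add: algebra_simps)
    have "((\<lambda>t. ln (1 + (s t)^2)) has_real_derivative
        (1 / (1 + (s t)^2)) * (2 * s t * (- ((s t)^2) - D * lam))) (at t within {0..1})"
      by (rule DERIV_chain2[OF DERIV_ln_divide[OF pos1[of t]] h])
    then show ?thesis unfolding \<phi>_def[abs_def] \<phi>'_def by simp
  qed
  have \<phi>'b: "\<bar>\<phi>' t\<bar> \<le> c * (g t + A)" if t: "t \<in> {0..1}" for t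
  proof -
    have "\<bar>(s t)^2 + D * lam\<bar> \<le> \<bar>(s t)^2\<bar> + \<bar>D * lam\<bar>" by (rule abs_triangle_ineq)
    also have "\<dots> \<le> (s t)^2 + D * L" using DlamL2 by simp
    also have "\<dots> \<le> (1 + D * L) * (1 + (s t)^2)" using L0 Dpos
      by (simp add: algebra_simps)
    finally have q: "\<bar>(s t)^2 + D * lam\<bar> / (1 + (s t)^2) \<le> 1 + D * L"
      using pos1[of t] by (simp add: divide_le_eq)
    have "\<bar>\<phi>' t\<bar> = 2 * \<bar>s t\<bar> * (\<bar>(s t)^2 + D * lam\<bar> / (1 + (s t)^2))"
    proof -
      have "\<phi>' t = - (2 * s t * (((s t)^2 + D * lam) / (1 + (s t)^2)))"
        using pos1[of t] unfolding \<phi>'_def by (simp add: field_simps)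
      then show ?thesis using pos1[of t] by (simp add: abs_mult abs_divide)
    qed
    also have "\<dots> \<le> 2 * \<bar>s t\<bar> * (1 + D * L)" using mult_left_mono[OF q, of "2 * \<bar>s t\<bar>"] by simp
    also have "\<dots> = c * \<bar>s t\<bar>" unfolding c_def' by simp
    also have "\<dots> \<le> c * (g t + A)" using sg[OF t] c0 by (simp add: mult_left_mono)
    finally show ?thesis .
  qed
  have GK2: "G b - G a \<le> K" if "0 \<le> a" "a \<le> b" "b \<le> 1" for a b
    using Gmono[of 0 a] Gmono[of b 1] GK that by simp
  have ph1: "- (\<phi>' t - c * g t - c * A) \<ge> 0" if t: "t \<in> {0..1}" for t
  proof -
    have "\<phi>' t \<le> c * (g t + A)" using \<phi>'b[OF t] abs_ge_self[of "\<phi>' t"] by linarith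
    then show ?thesis by (simp add: distrib_left)
  qed
  have ph2: "\<phi>' t + c * g t + c * A \<ge> 0" if t: "t \<in> {0..1}" for t
  proof -
    have "- \<phi>' t \<le> c * (g t + A)" using \<phi>'b[OF t] abs_ge_minus_self[of "\<phi>' t"] by linarith
    then show ?thesis by (simp add: distrib_left)
  qed
  have dH1: "((\<lambda>t. - (\<phi> t - c * G t - c * A * t)) has_real_derivative - (\<phi>' t - c * g t - c * A))
      (at t within {0..1})" if t: "t \<in> {0..1}" for t
    using d\<phi>[OF t] dG[OF t] by (auto intro!: derivative_eq_intros)
  have dH2: "((\<lambda>t. \<phi> t + c * G t + c * A * t) has_real_derivative \<phi>' t + c * g t + c * A)
      (at t within {0..1})" if t: "t \<in> {0..1}" for t
    using d\<phi>[OF t] dG[OF t] by (auto intro!: derivative_eq_intros)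
  have \<phi>b: "\<phi> t \<le> \<phi> \<xi> + c * K + c * A" if t: "t \<in> {0..1}" for t
  proof (cases "\<xi> \<le> t")
    case True
    have "- (\<phi> \<xi> - c * G \<xi> - c * A * \<xi>) \<le> - (\<phi> t - c * G t - c * A * t)"
      by (rule mono_within[of "\<lambda>t. - (\<phi> t - c * G t - c * A * t)" "\<lambda>t. - (\<phi>' t - c * g t - c * A)"])
        (use True t xi(1) dH1 ph1 in auto)
    then have "\<phi> t \<le> \<phi> \<xi> + c * (G t - G \<xi>) + (c * A) * (t - \<xi>)" by (simp add: algebra_simps)
    moreover have "c * (G t - G \<xi>) \<le> c * K" using GK2[of \<xi> t] True t xi(1) c0 by (simp add: mult_left_mono)
    moreover have "(c * A) * (t - \<xi>) \<le> (c * A) * 1" using True t xi(1) c0 A0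
      by (intro mult_left_mono) auto
    ultimately show ?thesis by simp
  next
    case False
    have "\<phi> t + c * G t + c * A * t \<le> \<phi> \<xi> + c * G \<xi> + c * A * \<xi>"
      by (rule mono_within[of "\<lambda>t. \<phi> t + c * G t + c * A * t" "\<lambda>t. \<phi>' t + c * g t + c * A"])
        (use False t xi(1) dH2 ph2 in auto)
    then have "\<phi> t \<le> \<phi> \<xi> + c * (G \<xi> - G t) + (c * A) * (\<xi> - t)" by (simp add: algebra_simps)
    moreover have "c * (G \<xi> - G t) \<le> c * K" using GK2[of t \<xi>] False t xi(1) c0 by (simp add: mult_left_mono)
    moreover have "(c * A) * (\<xi> - t) \<le> (c * A) * 1" using False t xi(1) c0 A0
      by (intro mult_left_mono) auto
    ultimately show ?thesis by simp
  qed
  have \<phi>xi: "\<phi> \<xi> \<le> ln (1 + D^2 * B0^2)"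
  proof -
    have "(s \<xi>)^2 \<le> (D * B0)^2"
      using sxi by (metis abs_ge_zero power2_abs power_mono)
    then show ?thesis unfolding \<phi>_def using pos1[of \<xi>]
      by (simp add: power_mult_distrib add_pos_nonneg)
  qed
  have sb: "(s t)^2 \<le> exp (Phi d c0 c1)" if t: "t \<in> {0..1}" for t
  proof -
    have "\<phi> t \<le> Phi d c0 c1" using \<phi>b[OF t] \<phi>xi unfolding Phi_eq by simp
    then have "exp (\<phi> t) \<le> exp (Phi d c0 c1)" by simp
    then show ?thesis unfolding \<phi>_def using pos1[of t] by simp
  qed
  have wb: "\<bar>y' t $ i\<bar> \<le> Wc d c0 c1" if t: "t \<in> {0..1}" for t i
  proof -
    have "(y' t $ i)^2 \<le> real (d i) * (y' t $ i)^2" using dpos[of i]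
      by (simp add: mult_le_cancel_right1)
    also have "\<dots> \<le> (\<Sum>k\<in>UNIV. real (d k) * (y' t $ k)^2)"
      by (rule member_le_sum) auto
    also have "\<dots> = (s t)^2 + (D - 1) * lam" using Qz[OF t] unfolding Q_def by simp
    also have "\<dots> \<le> exp (Phi d c0 c1) + D * L"
    proof -
      have "(D - 1) * lam \<le> (D - 1) * L" using lamL D2 by (intro mult_left_mono) auto
      also have "\<dots> \<le> D * L" using L0 by (simp add: algebra_simps)
      finally show ?thesis using sb[OF t] by simp
    qed
    finally have "\<bar>y' t $ i\<bar>^2 \<le> exp (Phi d c0 c1) + D * L" by simp
    then show ?thesis unfolding Wc_eq by (rule real_le_rsqrt)
  qed
  show ?thesis using lamL wb unfolding L_def by blast
qed




lemma sup2:
  fixes h f g :: "real \<Rightarrow> real"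
  assumes "A \<noteq> {}" "bdd_above (f ` A)" "bdd_above (g ` A)" "a \<ge> 0" "b \<ge> 0"
    and "\<And>t. t \<in> A \<Longrightarrow> h t \<le> a * f t + b * g t"
  shows "(SUP t\<in>A. h t) \<le> a * (SUP t\<in>A. f t) + b * (SUP t\<in>A. g t)"
proof (rule cSUP_least[OF assms(1)])
  fix t assume t: "t \<in> A"
  have "f t \<le> (SUP t\<in>A. f t)" by (rule cSUP_upper[OF t assms(2)])
  moreover have "g t \<le> (SUP t\<in>A. g t)" by (rule cSUP_upper[OF t assms(3)])
  ultimately have "a * f t + b * g t \<le> a * (SUP t\<in>A. f t) + b * (SUP t\<in>A. g t)"
    using assms(4,5) by (intro add_mono mult_left_mono) auto
  then show "h t \<le> a * (SUP t\<in>A. f t) + b * (SUP t\<in>A. g t)" using assms(6)[OF t] by linarith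
qed

lemma C1_D:
  assumes "C1 y"
  obtains y' where "\<And>t. t\<in>{0..1} \<Longrightarrow> (y has_vector_derivative y' t) (at t within {0..1})"
    "continuous_on {0..1} y'" "\<And>t. t \<notin> {0..1} \<Longrightarrow> y t = 0"
  using assms unfolding C1_def by blast

lemma vd_eq:
  fixes y :: "real \<Rightarrow> 'a::euclidean_space"
  assumes "(y has_vector_derivative v) (at t within {0..1})" "t \<in> {0..1}"
  shows "vector_derivative y (at t within {0..1}) = v"
  using vector_derivative_within_closed_interval[of 0 1 t y v] assms by simp

lemma bdd_cont:
  fixes F :: "real \<Rightarrow> 'a::real_normed_vector"
  assumes "continuous_on {0..1} F"
  shows "bdd_above ((\<lambda>t. norm (F t)) ` {0..1})"
proof -
  have "continuous_on {0..1} (\<lambda>t. norm (F t))" using assms by (intro continuous_intros)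
  then have "compact ((\<lambda>t. norm (F t)) ` {0..1})" by (intro compact_continuous_image) auto
  then show ?thesis by (intro bounded_imp_bdd_above compact_imp_bounded)
qed

lemma C1_cont:
  assumes "\<And>t. t\<in>{0..1} \<Longrightarrow> (y has_vector_derivative y' t) (at t within {0..1})"
  shows "continuous_on {0..1} y"
  using assms has_vector_derivative_continuous continuous_on_eq_continuous_within by blast

lemma C1_bdd:
  assumes "C1 y"
  shows "bdd_above ((\<lambda>t. norm (y t)) ` {0..1})"
    "bdd_above ((\<lambda>t. norm (vector_derivative y (at t within {0..1}))) ` {0..1})"
proof -
  obtain y' where y': "\<And>t. t\<in>{0..1} \<Longrightarrow> (y has_vector_derivative y' t) (at t within {0..1})"
    "continuous_on {0..1} y'" using C1_D[OF assms] by metis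
  show "bdd_above ((\<lambda>t. norm (y t)) ` {0..1})" by (rule bdd_cont[OF C1_cont[OF y'(1)]])
  have "(\<lambda>t. norm (vector_derivative y (at t within {0..1}))) ` {0..1} = (\<lambda>t. norm (y' t)) ` {0..1}"
    using vd_eq[OF y'(1)] by (intro image_cong) auto
  then show "bdd_above ((\<lambda>t. norm (vector_derivative y (at t within {0..1}))) ` {0..1})"
    using bdd_cont[OF y'(2)] by simp
qed

definition "Om R = {p \<in> space. pnorm p < R}"

lemma Om_convex: "convex_X (Om R)"
  unfolding convex_X_def
proof (intro ballI allI impI)
  fix p q :: "real \<times> (real \<Rightarrow> real ^ 'n)" and u :: real
  assume p: "p \<in> Om R" and q: "q \<in> Om R" and u: "0 \<le> u \<and> u \<le> 1"
  obtain a y1 where pp: "p = (a, y1)" by (cases p)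
  obtain b y2 where qq: "q = (b, y2)" by (cases q)
  have C1a: "C1 y1" and C1b: "C1 y2" and pa: "pnorm p < R" and qa: "pnorm q < R"
    using p q pp qq unfolding Om_def space_def by auto
  obtain y1' where y1': "\<And>t. t\<in>{0..1} \<Longrightarrow> (y1 has_vector_derivative y1' t) (at t within {0..1})"
    "continuous_on {0..1} y1'" "\<And>t. t \<notin> {0..1} \<Longrightarrow> y1 t = 0" using C1_D[OF C1a] by metis
  obtain y2' where y2': "\<And>t. t\<in>{0..1} \<Longrightarrow> (y2 has_vector_derivative y2' t) (at t within {0..1})"
    "continuous_on {0..1} y2'" "\<And>t. t \<notin> {0..1} \<Longrightarrow> y2 t = 0" using C1_D[OF C1b] by metis
  define r where "r t = (1 - u) *\<^sub>R y1 t + u *\<^sub>R y2 t" for t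
  have dr: "(r has_vector_derivative ((1 - u) *\<^sub>R y1' t + u *\<^sub>R y2' t)) (at t within {0..1})"
    if t: "t \<in> {0..1}" for t
    unfolding r_def[abs_def] using y1'(1)[OF t] y2'(1)[OF t] by (auto intro!: derivative_eq_intros)
  have C1r: "C1 r" unfolding C1_def
  proof (intro conjI exI[of _ "\<lambda>t. (1 - u) *\<^sub>R y1' t + u *\<^sub>R y2' t"])
    show "\<forall>t\<in>{0..1}. (r has_vector_derivative (1 - u) *\<^sub>R y1' t + u *\<^sub>R y2' t) (at t within {0..1})"
      using dr by blast
    show "continuous_on {0..1} (\<lambda>t. (1 - u) *\<^sub>R y1' t + u *\<^sub>R y2' t)"
      using y1'(2) y2'(2) by (intro continuous_intros)
    show "\<forall>t. t \<notin> {0..1} \<longrightarrow> r t = 0" using y1'(3) y2'(3) unfolding r_def by simp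
  qed
  have u0: "1 - u \<ge> 0" "u \<ge> 0" using u by auto
  have s1: "(SUP t\<in>{0..1}. norm (r t)) \<le> (1 - u) * (SUP t\<in>{0..1}. norm (y1 t)) + u * (SUP t\<in>{0..1}. norm (y2 t))"
    by (rule sup2[OF _ C1_bdd(1)[OF C1a] C1_bdd(1)[OF C1b] u0])
      (use u0 in \<open>auto simp: r_def intro!: order_trans[OF norm_triangle_ineq]\<close>)
  have s2: "(SUP t\<in>{0..1}. norm (vector_derivative r (at t within {0..1})))
      \<le> (1 - u) * (SUP t\<in>{0..1}. norm (vector_derivative y1 (at t within {0..1})))
        + u * (SUP t\<in>{0..1}. norm (vector_derivative y2 (at t within {0..1})))"
  proof (rule sup2[OF _ C1_bdd(2)[OF C1a] C1_bdd(2)[OF C1b] u0])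
    fix t :: real assume t: "t \<in> {0..1}"
    show "norm (vector_derivative r (at t within {0..1}))
        \<le> (1 - u) * norm (vector_derivative y1 (at t within {0..1}))
          + u * norm (vector_derivative y2 (at t within {0..1}))"
      using vd_eq[OF dr[OF t] t] vd_eq[OF y1'(1)[OF t] t] vd_eq[OF y2'(1)[OF t] t] u0
      by (auto intro!: order_trans[OF norm_triangle_ineq])
  qed simp
  have s3: "\<bar>(1 - u) * a + u * b\<bar> \<le> (1 - u) * \<bar>a\<bar> + u * \<bar>b\<bar>"
    using u0 by (auto intro!: order_trans[OF abs_triangle_ineq] simp: abs_mult)
  have "pnorm ((1 - u) * a + u * b, r) \<le> (1 - u) * pnorm p + u * pnorm q"
    using s1 s2 s3 unfolding pnorm_def c1norm_def pp qq by (simp add: algebra_simps)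
  also have "\<dots> \<le> (1 - u) * max (pnorm p) (pnorm q) + u * max (pnorm p) (pnorm q)"
    using u0 by (intro add_mono mult_left_mono) auto
  also have "\<dots> = max (pnorm p) (pnorm q)" by (simp add: algebra_simps)
  also have "\<dots> < R" using pa qa by simp
  finally show "((1 - u) * fst p + u * fst q, \<lambda>t. (1 - u) *\<^sub>R snd p t + u *\<^sub>R snd q t) \<in> Om R"
    using C1r unfolding Om_def space_def pp qq r_def[abs_def] by simp
qed

lemma Om_open: "open_X (Om R)"
  unfolding open_X_def
proof (intro ballI)
  fix p :: "real \<times> (real \<Rightarrow> real ^ 'n)" assume p: "p \<in> Om R"
  obtain a y1 where pp: "p = (a, y1)" by (cases p)
  have C1a: "C1 y1" and pa: "pnorm p < R" using p pp unfolding Om_def space_def by auto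
  obtain y1' where y1': "\<And>t. t\<in>{0..1} \<Longrightarrow> (y1 has_vector_derivative y1' t) (at t within {0..1})"
    "continuous_on {0..1} y1'" "\<And>t. t \<notin> {0..1} \<Longrightarrow> y1 t = 0" using C1_D[OF C1a] by metis
  show "\<exists>e>0. \<forall>q\<in>space. pnorm (pdiff q p) < e \<longrightarrow> q \<in> Om R"
  proof (intro exI[of _ "R - pnorm p"] conjI ballI impI)
    show "R - pnorm p > 0" using pa by simp
    fix q :: "real \<times> (real \<Rightarrow> real ^ 'n)"
    assume q: "q \<in> space" and qd: "pnorm (pdiff q p) < R - pnorm p"
    obtain b y2 where qq: "q = (b, y2)" by (cases q)
    have C1b: "C1 y2" using q qq unfolding space_def by auto
    obtain y2' where y2': "\<And>t. t\<in>{0..1} \<Longrightarrow> (y2 has_vector_derivative y2' t) (at t within {0..1})"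
      "continuous_on {0..1} y2'" "\<And>t. t \<notin> {0..1} \<Longrightarrow> y2 t = 0" using C1_D[OF C1b] by metis
    define r where "r t = y2 t - y1 t" for t
    have dr: "(r has_vector_derivative (y2' t - y1' t)) (at t within {0..1})"
      if t: "t \<in> {0..1}" for t
      unfolding r_def[abs_def] using y1'(1)[OF t] y2'(1)[OF t] by (auto intro!: derivative_eq_intros)
    have C1r: "C1 r" unfolding C1_def
    proof (intro conjI exI[of _ "\<lambda>t. y2' t - y1' t"])
      show "\<forall>t\<in>{0..1}. (r has_vector_derivative y2' t - y1' t) (at t within {0..1})"
        using dr by blast
      show "continuous_on {0..1} (\<lambda>t. y2' t - y1' t)"
        using y1'(2) y2'(2) by (intro continuous_intros)
      show "\<forall>t. t \<notin> {0..1} \<longrightarrow> r t = 0" using y1'(3) y2'(3) unfolding r_def by simp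
    qed
    have s1: "(SUP t\<in>{0..1}. norm (y2 t)) \<le> 1 * (SUP t\<in>{0..1}. norm (r t)) + 1 * (SUP t\<in>{0..1}. norm (y1 t))"
      by (rule sup2[OF _ C1_bdd(1)[OF C1r] C1_bdd(1)[OF C1a]])
        (auto simp: r_def intro!: order_trans[OF _ norm_triangle_ineq])
    have s2: "(SUP t\<in>{0..1}. norm (vector_derivative y2 (at t within {0..1})))
        \<le> 1 * (SUP t\<in>{0..1}. norm (vector_derivative r (at t within {0..1})))
          + 1 * (SUP t\<in>{0..1}. norm (vector_derivative y1 (at t within {0..1})))"
    proof (rule sup2[OF _ C1_bdd(2)[OF C1r] C1_bdd(2)[OF C1a]])
      fix t :: real assume t: "t \<in> {0..1}"
      have "norm (y2' t) \<le> norm (y2' t - y1' t) + norm (y1' t)" using norm_triangle_ineq[of "y2' t - y1' t" "y1' t"] by simp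
      then show "norm (vector_derivative y2 (at t within {0..1}))
          \<le> 1 * norm (vector_derivative r (at t within {0..1}))
            + 1 * norm (vector_derivative y1 (at t within {0..1}))"
        using vd_eq[OF dr[OF t] t] vd_eq[OF y1'(1)[OF t] t] vd_eq[OF y2'(1)[OF t] t] by simp
    qed auto
    have s3: "\<bar>b\<bar> \<le> \<bar>b - a\<bar> + \<bar>a\<bar>" by simp
    have "pnorm q \<le> pnorm (pdiff q p) + pnorm p"
      using s1 s2 s3 unfolding pnorm_def c1norm_def pp qq pdiff_def r_def[abs_def] by simp
    then show "q \<in> Om R" using qd q unfolding Om_def by simp
  qed
qed


lemma sol_bound:
  fixes d :: "'n::finite \<Rightarrow> nat" and c0 c1 :: "real ^ 'n"
  assumes dpos: "\<And>i. d i > 0" and d2: "(\<Sum>i\<in>UNIV. d i) \<ge> 2"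
    and p3: "p3 \<in> {0..1}"
    and dy: "\<forall>t\<in>{0..1}. (y has_vector_derivative y' t) (at t within {0..1})"
    and dy': "\<forall>t\<in>{0..1}. (y' has_vector_derivative y'' t) (at t within {0..1})"
    and bc: "(\<Sum>i\<in>UNIV. real (d i) *
                  (- (y' 0 $ i) * (\<Sum>k\<in>UNIV. real (d k) * y' 0 $ k) + (y' 0 $ i)^2))
                = (real (\<Sum>i\<in>UNIV. d i) - 1) * lam"
    and eq: "\<forall>t\<in>{0..1}. \<forall>i.
                  - (y' t $ i) * (\<Sum>k\<in>UNIV. real (d k) * y' t $ k) - y'' t $ i = lam"
    and y0: "y 0 = p3 *\<^sub>R c0" and y1: "y 1 = p3 *\<^sub>R c1"
  shows "pnorm (lam, y) \<le> Lc d c0 c1 + real CARD('n) * (norm c0 + Wc d c0 c1) + real CARD('n) * Wc d c0 c1"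
proof -
  have ap: "\<bar>lam\<bar> \<le> Lc d c0 c1" "\<And>t i. t \<in> {0..1} \<Longrightarrow> \<bar>y' t $ i\<bar> \<le> Wc d c0 c1"
    using apriori[OF dpos d2 p3 dy dy' bc eq y0 y1] by auto
  define W where "W = Wc d c0 c1"
  have dY: "((\<lambda>t. y t $ i) has_real_derivative y' t $ i) (at t within {0..1})"
    if "t \<in> {0..1}" for i t using comp_deriv dy that by blast
  have yb: "\<bar>y t $ i\<bar> \<le> norm c0 + W" if t: "t \<in> {0..1}" for t i
  proof -
    have wl: "- W \<le> y' x $ i \<and> y' x $ i \<le> W" if "x \<in> {0..1}" for x
      using ap(2)[OF that, of i] unfolding W_def by linarith
    have wl2: "0 \<le> W + y' x $ i" "0 \<le> W - y' x $ i" "y' x $ i \<le> W" "- W \<le> y' x $ i" if "x \<in> {0..1}" for x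
      using wl[OF that] by linarith+
    have a1: "W * 0 - y 0 $ i \<le> W * t - y t $ i"
      by (rule mono_within[of "\<lambda>t. W * t - y t $ i" "\<lambda>t. W - y' t $ i"])
        (use t dY in \<open>auto intro!: derivative_eq_intros simp: wl2\<close>)
    have a2: "W * 0 + y 0 $ i \<le> W * t + y t $ i"
      by (rule mono_within[of "\<lambda>t. W * t + y t $ i" "\<lambda>t. W + y' t $ i"])
        (use t dY in \<open>auto intro!: derivative_eq_intros simp: wl2\<close>)
    have W0: "W \<ge> 0" using ap(2)[of 0 i] unfolding W_def by (meson abs_ge_zero atLeastAtMost_iff order_trans zero_le_one order_refl)
    have "W * t \<le> W * 1" using t W0 by (intro mult_left_mono) auto
    moreover have "\<bar>y 0 $ i\<bar> \<le> norm c0"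
    proof -
      have "\<bar>y 0 $ i\<bar> = p3 * \<bar>c0 $ i\<bar>" using p3 by (simp add: y0 abs_mult)
      also have "\<dots> \<le> \<bar>c0 $ i\<bar>" using p3 by (simp add: mult_left_le_one_le)
      also have "\<dots> \<le> norm c0" by (rule component_le_norm_cart)
      finally show ?thesis .
    qed
    ultimately show ?thesis using a1 a2 by (simp add: abs_le_iff)
  qed
  have nb: "norm (y t) \<le> real CARD('n) * (norm c0 + W)" if t: "t \<in> {0..1}" for t
  proof -
    have "norm (y t) \<le> (\<Sum>i\<in>UNIV. \<bar>y t $ i\<bar>)" by (rule norm_le_l1_cart)
    also have "\<dots> \<le> (\<Sum>i\<in>(UNIV::'n set). norm c0 + W)" by (rule sum_mono) (use yb t in auto)
    finally show ?thesis by simp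
  qed
  have nb': "norm (vector_derivative y (at t within {0..1})) \<le> real CARD('n) * W" if t: "t \<in> {0..1}" for t
  proof -
    have "vector_derivative y (at t within {0..1}) = y' t" using vd_eq dy t by blast
    moreover have "norm (y' t) \<le> (\<Sum>i\<in>UNIV. \<bar>y' t $ i\<bar>)" by (rule norm_le_l1_cart)
    moreover have "\<dots> \<le> (\<Sum>i\<in>(UNIV::'n set). W)" by (rule sum_mono) (use ap(2) t in \<open>auto simp: W_def\<close>)
    ultimately show ?thesis by simp
  qed
  have "(SUP t\<in>{0..1}. norm (y t)) \<le> real CARD('n) * (norm c0 + W)"
    by (rule cSUP_least) (use nb in auto)
  moreover have "(SUP t\<in>{0..1}. norm (vector_derivative y (at t within {0..1}))) \<le> real CARD('n) * W"
    by (rule cSUP_least) (use nb' in auto)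
  ultimately show ?thesis using ap(1) unfolding pnorm_def c1norm_def W_def by simp
qed

theorem lemma4p3:
  fixes d :: "'n::finite \<Rightarrow> nat" and c0 c1 :: "real ^ 'n"
  assumes "\<And>i. d i > 0"
    and "(\<Sum>i\<in>UNIV. d i) \<ge> 2"
  shows "\<exists>\<Omega>::(real \<times> (real \<Rightarrow> real ^ 'n)) set.
           \<Omega> \<subseteq> space \<and> bounded_X \<Omega> \<and> convex_X \<Omega> \<and> open_X \<Omega> \<and>
           (\<forall>lam y p3 y' y''.
              C1 y \<and> p3 \<in> {0..1} \<and>
              (\<forall>t\<in>{0..1}. (y has_vector_derivative y' t) (at t within {0..1})) \<and>
              (\<forall>t\<in>{0..1}. (y' has_vector_derivative y'' t) (at t within {0..1})) \<and>
              continuous_on {0..1} y'' \<and>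
              (\<Sum>i\<in>UNIV. real (d i) *
                  (- (y' 0 $ i) * (\<Sum>k\<in>UNIV. real (d k) * y' 0 $ k) + (y' 0 $ i)^2))
                = (real (\<Sum>i\<in>UNIV. d i) - 1) * lam \<and>
              (\<forall>t\<in>{0..1}. \<forall>i.
                  - (y' t $ i) * (\<Sum>k\<in>UNIV. real (d k) * y' t $ k) - y'' t $ i = lam) \<and>
              y 0 = p3 *\<^sub>R c0 \<and> y 1 = p3 *\<^sub>R c1
              \<longrightarrow> (lam, y) \<in> \<Omega>)"
proof -
  define R0 where "R0 = Lc d c0 c1 + real CARD('n) * (norm c0 + Wc d c0 c1) + real CARD('n) * Wc d c0 c1"
  show ?thesis
  proof (intro exI[of _ "Om (R0 + 1)"] conjI allI impI)
    show "Om (R0 + 1) \<subseteq> space" unfolding Om_def by auto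
    show "bounded_X (Om (R0 + 1))" unfolding bounded_X_def Om_def
      by (intro exI[of _ "R0 + 1"]) auto
    show "convex_X (Om (R0 + 1))" by (rule Om_convex)
    show "open_X (Om (R0 + 1))" by (rule Om_open)
    fix lam y p3 y' y''
    assume h: "C1 y \<and> p3 \<in> {0..1} \<and>
              (\<forall>t\<in>{0..1}. (y has_vector_derivative y' t) (at t within {0..1})) \<and>
              (\<forall>t\<in>{0..1}. (y' has_vector_derivative y'' t) (at t within {0..1})) \<and>
              continuous_on {0..1} y'' \<and>
              (\<Sum>i\<in>UNIV. real (d i) *
                  (- (y' 0 $ i) * (\<Sum>k\<in>UNIV. real (d k) * y' 0 $ k) + (y' 0 $ i)^2))
                = (real (\<Sum>i\<in>UNIV. d i) - 1) * lam \<and>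
              (\<forall>t\<in>{0..1}. \<forall>i.
                  - (y' t $ i) * (\<Sum>k\<in>UNIV. real (d k) * y' t $ k) - y'' t $ i = lam) \<and>
              y 0 = p3 *\<^sub>R c0 \<and> y 1 = p3 *\<^sub>R c1"
    then have "pnorm (lam, y) \<le> R0" unfolding R0_def
      using sol_bound[OF assms, of p3 y y' y'' lam] by blast
    then show "(lam, y) \<in> Om (R0 + 1)" using h unfolding Om_def space_def by auto
  qed
qed

end
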